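(* Let $F$ be a local function of range $R$ satisfying conditions (i)–(iv) of the context with associated $\theta$, let $\Sigma\subseteq(0,\infty)$ be non-empty finite, $\kappa\in(0,1)$, $\mu\ge0$, $L\ge1$, $K\ge100$ integers, $z\in\mathbb L$ and $B=B_z$. Then for every $u>0$ and $\alpha\in\Sigma$: if $B$ is $(\Sigma,\kappa,\mu)$-good and $N_u(B)/\mathrm{cap}(B)\le\alpha$, then $\langle\bar e_B,L^u\rangle$ and $\langle m_B,L^u\rangle$ are smaller than $(1+\kappa)\alpha$ and $\frac1{|B|}\sum_{x\in B_R}F((L^u_{x+y})_{|y|_\infty\le R})<\theta((1+\kappa)\alpha)+\mu$; and if $B$ is $(\Sigma,\kappa,\mu)$-good and $N_u(B)/\mathrm{cap}(B)\ge\alpha$, then $\langle\bar e_B,L^u\rangle$ and $\langle m_B,L^u\rangle$ are bigger than $(1-\kappa)\alpha$ and $\frac1{|B|}\sum_{x\in B}F((L^u_{x+y})_{|y|_\infty\le R})>\theta((1-\kappa)\alpha)-\mu$. Moreover, if for each $\alpha\in\Sigma$ one has $\Sigma\cap((1-\kappa)\alpha,(1+\kappa)\alpha)=\{\alpha\}$, then whenever $B$ is $(\Sigma,\kappa,\mu)$-good, for all $u>0$ at most two elements of $\Sigma$ lie (in the wide sense) between any pair of values among $N_u(B)/\mathrm{cap}(B)$, $\langle\bar e_B,L^u\rangle$, $\langle m_B,L^u\rangle$.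
   Context: $d\ge3$. Random interlacements on $\mathbb Z^d$ (governed by $\mathbb P$) are a Poisson cloud of labelled doubly-infinite continuous-time simple random walk trajectories; $L^u_x$ is the total time spent at $x$ by trajectories with label at most $u$. $B(x,r)$ is the closed sup-norm ball. Local function: an integer $R\ge0$ and $F:[0,\infty)^{B(0,R)}\to[0,\infty)$ with (i) $F$ measurable and non-decreasing in each variable; (ii) $F(0)=0$; (iii) there is $c(F)$ with $F(\ell+\ell')\le F(\ell)+c(F)(1\{\ell'\ne0\}+\sum_{|x|_\infty\le R}\ell'_x)$; (iv) $\theta(u)=\mathbb E[F((L^u_y)_{|y|_\infty\le R})]$ is continuous in $u\ge0$. $F_0$ denotes the local function $F_0(\ell)=\ell$ with $R=0$ (so $\theta(u)=u$). Boxes: $\mathbb L=L\mathbb Z^d$; for $z\in\mathbb L$, $B_z=z+[0,L)^d$ and $U_z=z+[-KL+1,KL-1)^d$ (intersected with $\mathbb Z^d$). For $B=B_z$, $U=U_z$: $N_u(B)$ is the total number of excursions from $B$ to the outer boundary $\partial U$ in all interlacement trajectories with label $\le u$; $Z^B_\ell$, $\ell\ge1$, are the successive such excursions in the interlacement trajectories (ordered by label, then in time); $L^B_{a,x}=\sum_{1\le\ell\le a}\int_0^{T_U(Z^B_\ell)}1\{Z^B_\ell(s)=x\}ds$ ($T_U$ the exit time from $U$); $F^B_{a,x}=F((L^B_{a,x+y})_{|y|_\infty\le R})$, $F^B_a=\sum_{x\in B}F^B_{a,x}$; $\langle\rho,L^B_a\rangle=\sum_x\rho(x)L^B_{a,x}$.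 $e_B$ is the equilibrium measure of $B$, $\mathrm{cap}(B)$ its total mass, $\bar e_B=e_B/\mathrm{cap}(B)$, $m_B$ the normalized counting measure on $B$, $\langle\rho,L^u\rangle=\sum_x\rho(x)L^u_x$, $B_R=\{x\in B:B(x,R)\subseteq B\}$. Bad events: $\mathcal B^{B,F}_{\alpha,\kappa,\mu}=\{\langle\bar e_B,L^B_{\alpha\mathrm{cap}(B)}\rangle\notin(\alpha(1-\kappa),\alpha(1+\kappa))\}\cup\{\frac1{|B|}F^B_{\alpha\mathrm{cap}(B)}\notin(\theta(\alpha(1-\kappa))-\mu,\theta(\alpha(1+\kappa))+\mu)\}$, and $\mathcal B^{B,F}_{\Sigma,\kappa,\mu}=\bigcup_{\alpha\in\Sigma}(\mathcal B^{B,F}_{\alpha,\kappa,\mu}\cup\mathcal B^{B,F_0}_{\alpha,\kappa,0})$. $B$ is $(\Sigma,\kappa,\mu)$-bad if this event occurs, $(\Sigma,\kappa,\mu)$-good otherwise. *)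

theory Defs
  imports "HOL-Probability.Probability"
begin

type_synonym 'd site = "int ^ 'd"

definition supnorm :: "int ^ 'd \<Rightarrow> int" where
  "supnorm x = Max (range (\<lambda>i. \<bar>x $ i\<bar>))"

definition ballinf :: "int ^ 'd \<Rightarrow> int \<Rightarrow> (int ^ 'd) set" where
  "ballinf x r = {y. supnorm (y - x) \<le> r}"

definition boxB :: "int \<Rightarrow> int ^ 'd \<Rightarrow> (int ^ 'd) set" where
  "boxB L z = {x. \<forall>i. z $ i \<le> x $ i \<and> x $ i < z $ i + L}"

definition boxU :: "int \<Rightarrow> int \<Rightarrow> int ^ 'd \<Rightarrow> (int ^ 'd) set" where
  "boxU K L z = {x. \<forall>i. z $ i - K * L + 1 \<le> x $ i \<and> x $ i < z $ i + K * L - 1}"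

definition B_R :: "nat \<Rightarrow> (int ^ 'd) set \<Rightarrow> (int ^ 'd) set" where
  "B_R R B = {x \<in> B. ballinf x (int R) \<subseteq> B}"

definition unit_steps :: "(int ^ 'd) set" where
  "unit_steps = {v. (\<Sum>i\<in>UNIV. \<bar>v $ i\<bar>) = 1}"

text \<open>P_x[the discrete SRW started at x does not return to A during steps 1..n]\<close>
definition noreturn_prob :: "(int ^ 'd) set \<Rightarrow> int ^ 'd \<Rightarrow> nat \<Rightarrow> real" where
  "noreturn_prob A x n =
     real (card {ds :: (int ^ 'd) list. length ds = n \<and> set ds \<subseteq> unit_steps \<and>
                   (\<forall>i\<in>{1..n}. x + sum_list (take i ds) \<notin> A)})
     / (2 * real CARD('d)) ^ n"

text \<open>escape probability P_x[tilde H_A = infinity] (limit of a decreasing sequence)\<close>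
definition escape_prob :: "(int ^ 'd) set \<Rightarrow> int ^ 'd \<Rightarrow> real" where
  "escape_prob A x = (INF n. noreturn_prob A x n)"

definition eq_measure :: "(int ^ 'd) set \<Rightarrow> int ^ 'd \<Rightarrow> real" where
  "eq_measure A x = (if x \<in> A then escape_prob A x else 0)"

definition cap :: "(int ^ 'd) set \<Rightarrow> real" where
  "cap A = (\<Sum>x\<in>A. eq_measure A x)"

definition eq_bar :: "(int ^ 'd) set \<Rightarrow> int ^ 'd \<Rightarrow> real" where
  "eq_bar A x = eq_measure A x / cap A"

definition unif_meas :: "(int ^ 'd) set \<Rightarrow> int ^ 'd \<Rightarrow> real" where
  "unif_meas A x = (if x \<in> A then 1 / real (card A) else 0)"

definition pairing :: "(int ^ 'd \<Rightarrow> real) \<Rightarrow> (int ^ 'd) set \<Rightarrow> (int ^ 'd \<Rightarrow> real) \<Rightarrow> real" where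
  "pairing \<rho> A l = (\<Sum>x\<in>A. \<rho> x * l x)"

text \<open>A labelled continuous-time trajectory is given by (label, discrete skeleton X, holding
  times sigma): the walk sits at X n during a time interval of length sigma n.\<close>
type_synonym 'd config = "(real \<times> (int \<Rightarrow> int ^ 'd) \<times> (int \<Rightarrow> real)) set"

definition wf_config :: "('d::finite) config \<Rightarrow> bool" where
  "wf_config \<omega> \<longleftrightarrow>
     (\<forall>(v, X, \<sigma>) \<in> \<omega>.
        0 \<le> v \<and> (\<forall>n. X (n + 1) - X n \<in> unit_steps) \<and> (\<forall>n. 0 < \<sigma> n) \<and>
        (\<forall>x. finite {n. X n = x})) \<and>
     (\<forall>p\<in>\<omega>. \<forall>q\<in>\<omega>. fst p = fst q \<longrightarrow> p = q) \<and>
     (\<forall>u x. finite {p \<in> \<omega>. fst p \<le> u \<and> x \<in> range (fst (snd p))})"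

definition occ :: "('d::finite) config \<Rightarrow> real \<Rightarrow> int ^ 'd \<Rightarrow> real" where
  "occ \<omega> u x = (\<Sum>(v, X, \<sigma>) \<in> {p \<in> \<omega>. fst p \<le> u \<and> x \<in> range (fst (snd p))}.
                   \<Sum>k | X k = x. \<sigma> k)"

text \<open>n is the starting index of an excursion from B to the outer boundary of U\<close>
definition exc_start :: "(int ^ 'd) set \<Rightarrow> (int ^ 'd) set \<Rightarrow> (int \<Rightarrow> int ^ 'd) \<Rightarrow> int \<Rightarrow> bool" where
  "exc_start B U X n \<longleftrightarrow> X n \<in> B \<and>
     (\<forall>m<n. X m \<in> B \<longrightarrow> (\<exists>k. m < k \<and> k < n \<and> X k \<notin> U))"

definition exc_time :: "(int ^ 'd) set \<Rightarrow> (int \<Rightarrow> int ^ 'd) \<Rightarrow> (int \<Rightarrow> real) \<Rightarrow> int \<Rightarrow> int ^ 'd \<Rightarrow> real" where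
  "exc_time U X \<sigma> n x = (\<Sum>k | n \<le> k \<and> (\<forall>j. n \<le> j \<and> j \<le> k \<longrightarrow> X j \<in> U) \<and> X k = x. \<sigma> k)"

definition excs :: "('d::finite) config \<Rightarrow> (int ^ 'd) set \<Rightarrow> (int ^ 'd) set \<Rightarrow>
    (real \<times> (int \<Rightarrow> int ^ 'd) \<times> (int \<Rightarrow> real) \<times> int) set" where
  "excs \<omega> B U = {(v, X, \<sigma>, n). (v, X, \<sigma>) \<in> \<omega> \<and> exc_start B U X n}"

definition exc_before :: "real \<times> (int \<Rightarrow> int ^ 'd) \<times> (int \<Rightarrow> real) \<times> int \<Rightarrow>
    real \<times> (int \<Rightarrow> int ^ 'd) \<times> (int \<Rightarrow> real) \<times> int \<Rightarrow> bool" where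
  "exc_before e e' \<longleftrightarrow> fst e < fst e' \<or>
     (fst e = fst e' \<and> snd (snd (snd e)) < snd (snd (snd e')))"

definition first_excs :: "('d::finite) config \<Rightarrow> (int ^ 'd) set \<Rightarrow> (int ^ 'd) set \<Rightarrow> real \<Rightarrow>
    (real \<times> (int \<Rightarrow> int ^ 'd) \<times> (int \<Rightarrow> real) \<times> int) set" where
  "first_excs \<omega> B U a =
     {e \<in> excs \<omega> B U. real (card {e' \<in> excs \<omega> B U. exc_before e' e}) + 1 \<le> a}"

definition LB :: "('d::finite) config \<Rightarrow> (int ^ 'd) set \<Rightarrow> (int ^ 'd) set \<Rightarrow> real \<Rightarrow> int ^ 'd \<Rightarrow> real" where
  "LB \<omega> B U a x = (\<Sum>(v, X, \<sigma>, n) \<in> first_excs \<omega> B U a. exc_time U X \<sigma> n x)"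

definition Nexc :: "('d::finite) config \<Rightarrow> (int ^ 'd) set \<Rightarrow> (int ^ 'd) set \<Rightarrow> real \<Rightarrow> nat" where
  "Nexc \<omega> B U u = card {e \<in> excs \<omega> B U. fst e \<le> u}"

definition Floc :: "((int ^ 'd \<Rightarrow> real) \<Rightarrow> real) \<Rightarrow> nat \<Rightarrow> (int ^ 'd \<Rightarrow> real) \<Rightarrow> real" where
  "Floc F R l = F (restrict l (ballinf 0 (int R)))"

definition theta :: "((int ^ 'd \<Rightarrow> real) \<Rightarrow> real) \<Rightarrow> nat \<Rightarrow> ('d::finite) config measure \<Rightarrow> real \<Rightarrow> real" where
  "theta F R P u = (\<integral>\<omega>. Floc F R (occ \<omega> u) \<partial>P)"

definition local_function :: "((int ^ 'd \<Rightarrow> real) \<Rightarrow> real) \<Rightarrow> nat \<Rightarrow> ('d::finite) config measure \<Rightarrow> bool" where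
  "local_function F R P \<longleftrightarrow>
     F \<in> borel_measurable (PiM (ballinf 0 (int R)) (\<lambda>_. borel)) \<and>
     (\<forall>l. (\<forall>y\<in>ballinf 0 (int R). 0 \<le> l y) \<longrightarrow> 0 \<le> Floc F R l) \<and>
     (\<forall>l l'. (\<forall>y\<in>ballinf 0 (int R). 0 \<le> l y \<and> l y \<le> l' y) \<longrightarrow> Floc F R l \<le> Floc F R l') \<and>
     Floc F R (\<lambda>_. 0) = 0 \<and>
     (\<exists>c. \<forall>l l'. (\<forall>y\<in>ballinf 0 (int R). 0 \<le> l y \<and> 0 \<le> l' y) \<longrightarrow>
         Floc F R (\<lambda>y. l y + l' y) \<le> Floc F R l +
           c * ((if \<exists>y\<in>ballinf 0 (int R). l' y \<noteq> 0 then 1 else 0) + (\<Sum>y\<in>ballinf 0 (int R). l' y))) \<and>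
     continuous_on {0..} (theta F R P)"

text \<open>F_0(l) = l_0, range 0, with theta(u) = u\<close>
definition F0 :: "(int ^ 'd \<Rightarrow> real) \<Rightarrow> real" where
  "F0 l = l 0"

definition FB :: "((int ^ 'd \<Rightarrow> real) \<Rightarrow> real) \<Rightarrow> nat \<Rightarrow> ('d::finite) config \<Rightarrow> (int ^ 'd) set \<Rightarrow> (int ^ 'd) set \<Rightarrow> real \<Rightarrow> real" where
  "FB F R \<omega> B U a = (\<Sum>x\<in>B. Floc F R (\<lambda>y. LB \<omega> B U a (x + y)))"

definition bad_alpha :: "((int ^ 'd \<Rightarrow> real) \<Rightarrow> real) \<Rightarrow> nat \<Rightarrow> (real \<Rightarrow> real) \<Rightarrow> ('d::finite) config \<Rightarrow>
    (int ^ 'd) set \<Rightarrow> (int ^ 'd) set \<Rightarrow> real \<Rightarrow> real \<Rightarrow> real \<Rightarrow> bool" where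
  "bad_alpha F R th \<omega> B U \<alpha> \<kappa> \<mu> \<longleftrightarrow>
     \<not> (\<alpha> * (1 - \<kappa>) < pairing (eq_bar B) B (LB \<omega> B U (\<alpha> * cap B)) \<and>
        pairing (eq_bar B) B (LB \<omega> B U (\<alpha> * cap B)) < \<alpha> * (1 + \<kappa>)) \<or>
     \<not> (th (\<alpha> * (1 - \<kappa>)) - \<mu> < FB F R \<omega> B U (\<alpha> * cap B) / real (card B) \<and>
        FB F R \<omega> B U (\<alpha> * cap B) / real (card B) < th (\<alpha> * (1 + \<kappa>)) + \<mu>)"

definition bad :: "((int ^ 'd \<Rightarrow> real) \<Rightarrow> real) \<Rightarrow> nat \<Rightarrow> ('d::finite) config measure \<Rightarrow> ('d::finite) config \<Rightarrow>
    (int ^ 'd) set \<Rightarrow> (int ^ 'd) set \<Rightarrow> real set \<Rightarrow> real \<Rightarrow> real \<Rightarrow> bool" where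
  "bad F R P \<omega> B U \<Sigma> \<kappa> \<mu> \<longleftrightarrow>
     (\<exists>\<alpha>\<in>\<Sigma>. bad_alpha F R (theta F R P) \<omega> B U \<alpha> \<kappa> \<mu> \<or>
              bad_alpha F0 0 (\<lambda>u. u) \<omega> B U \<alpha> \<kappa> 0)"

definition good :: "((int ^ 'd \<Rightarrow> real) \<Rightarrow> real) \<Rightarrow> nat \<Rightarrow> ('d::finite) config measure \<Rightarrow> ('d::finite) config \<Rightarrow>
    (int ^ 'd) set \<Rightarrow> (int ^ 'd) set \<Rightarrow> real set \<Rightarrow> real \<Rightarrow> real \<Rightarrow> bool" where
  "good F R P \<omega> B U \<Sigma> \<kappa> \<mu> \<longleftrightarrow> \<not> bad F R P \<omega> B U \<Sigma> \<kappa> \<mu>"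

end

theory Submission
  imports Defs
begin

lemma exc_disjoint:
  assumes "exc_start B U X n" "exc_start B U X n'" "n < n'"
    "\<forall>j. n \<le> j \<and> j \<le> k \<longrightarrow> X j \<in> U" "n \<le> k"
  shows "k < n'"
proof -
  from assms(1) have "X n \<in> B" by (simp add: exc_start_def)
  with assms(2,3) obtain kk where kk: "n < kk" "kk < n'" "X kk \<notin> U"
    unfolding exc_start_def by blast
  show ?thesis
  proof (rule ccontr)
    assume "\<not> k < n'"
    then have "n \<le> kk \<and> kk \<le> k" using kk by auto
    with assms(4) kk(3) show False by blast
  qed
qed

lemma coverage:
  assumes finS: "finite {n. X n \<in> B}" and BU: "B \<subseteq> U" and k: "X k \<in> B"
  shows "\<exists>n. exc_start B U X n \<and> n \<le> k \<and> (\<forall>j. n \<le> j \<and> j \<le> k \<longrightarrow> X j \<in> U)"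
proof -
  define n0 where "n0 = Min {n. X n \<in> B}"
  have n0B: "X n0 \<in> B" unfolding n0_def using Min_in[OF finS] k by auto
  have n0k: "n0 \<le> k" unfolding n0_def using Min_le[OF finS] k by auto
  have n0s: "exc_start B U X n0"
    unfolding exc_start_def using n0B Min_le[OF finS] n0_def by force
  define N' where "N' = {n. exc_start B U X n \<and> n \<le> k}"
  have finN': "finite N'"
    by (rule finite_subset[OF _ finS]) (auto simp: N'_def exc_start_def)
  have "n0 \<in> N'" using n0s n0k by (simp add: N'_def)
  define n where "n = Max N'"
  have nN: "n \<in> N'" unfolding n_def using Max_in[OF finN'] \<open>n0 \<in> N'\<close> by auto
  have cov: "\<forall>j. n \<le> j \<and> j \<le> k \<longrightarrow> X j \<in> U"
  proof (rule ccontr)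
    assume "\<not> ?thesis"
    then obtain j where j: "n \<le> j" "j \<le> k" "X j \<notin> U" by blast
    define M where "M = {i. j \<le> i \<and> i \<le> k \<and> X i \<in> B}"
    have finM: "finite M" by (rule finite_subset[OF _ finS]) (auto simp: M_def)
    have "k \<in> M" using j k by (simp add: M_def)
    define m where "m = Min M"
    have mM: "m \<in> M" unfolding m_def using Min_in[OF finM] \<open>k \<in> M\<close> by auto
    have "m \<noteq> j" using mM j(3) BU by (auto simp: M_def)
    then have jm: "j < m" using mM by (auto simp: M_def)
    have "exc_start B U X m"
      unfolding exc_start_def
    proof (intro conjI allI impI)
      show "X m \<in> B" using mM by (simp add: M_def)
      fix m' assume m': "m' < m" "X m' \<in> B"
      show "\<exists>kk>m'. kk < m \<and> X kk \<notin> U"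
      proof (cases "m' < j")
        case True then show ?thesis using jm j(3) by blast
      next
        case False
        then have "m' \<in> M" using m' mM by (auto simp: M_def)
        then have "m \<le> m'" unfolding m_def using Min_le[OF finM] by auto
        then show ?thesis using m' by simp
      qed
    qed
    then have "m \<in> N'" using mM by (simp add: N'_def M_def)
    then have "m \<le> n" unfolding n_def using Max_ge[OF finN'] by auto
    then show False using jm j by simp
  qed
  show ?thesis using nN cov by (auto simp: N'_def)
qed

lemma traj_lemma:
  fixes X :: "int \<Rightarrow> int ^ 'd" and \<sigma> :: "int \<Rightarrow> real"
  assumes finB: "finite B" and BU: "B \<subseteq> U"
    and fin: "\<forall>y. finite {n. X n = y}" and pos: "\<forall>n. 0 < \<sigma> n"
  shows "(\<Sum>n\<in>{n. exc_start B U X n}. exc_time U X \<sigma> n x) \<le> (\<Sum>k\<in>{k. X k = x}. \<sigma> k)"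
    and "x \<in> B \<Longrightarrow> (\<Sum>n\<in>{n. exc_start B U X n}. exc_time U X \<sigma> n x) = (\<Sum>k\<in>{k. X k = x}. \<sigma> k)"
proof -
  have finS: "finite {n. X n \<in> B}"
  proof -
    have "{n. X n \<in> B} = (\<Union>y\<in>B. {n. X n = y})" by auto
    then show ?thesis using finB fin by simp
  qed
  have finSt: "finite {n. exc_start B U X n}"
    by (rule finite_subset[OF _ finS]) (auto simp: exc_start_def)
  define C where "C n = {k. n \<le> k \<and> (\<forall>j. n \<le> j \<and> j \<le> k \<longrightarrow> X j \<in> U) \<and> X k = x}" for n
  have et: "exc_time U X \<sigma> n x = sum \<sigma> (C n)" for n
    unfolding exc_time_def C_def by simp
  have finC: "finite (C n)" for n
    by (rule finite_subset[OF _ fin[rule_format, of x]]) (auto simp: C_def)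
  have disj: "C n \<inter> C n' = {}" if "exc_start B U X n" "exc_start B U X n'" "n \<noteq> n'" for n n'
  proof -
    have *: "C a \<inter> C b = {}" if "exc_start B U X a" "exc_start B U X b" "a < b" for a b
      using exc_disjoint[OF that] by (force simp: C_def)
    show ?thesis using that *[of n n'] *[of n' n] by (cases "n < n'") (auto simp: Int_commute)
  qed
  have eq: "(\<Sum>n\<in>{n. exc_start B U X n}. exc_time U X \<sigma> n x) = sum \<sigma> (\<Union>(C ` {n. exc_start B U X n}))"
    unfolding et
    by (rule sum.UNION_disjoint[symmetric]) (use finSt finC disj in auto)
  have sub: "\<Union>(C ` {n. exc_start B U X n}) \<subseteq> {k. X k = x}" by (auto simp: C_def)
  show "(\<Sum>n\<in>{n. exc_start B U X n}. exc_time U X \<sigma> n x) \<le> (\<Sum>k\<in>{k. X k = x}. \<sigma> k)"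
    unfolding eq by (rule sum_mono2[OF fin[rule_format] sub]) (use pos in \<open>auto intro: less_imp_le\<close>)
  assume xB: "x \<in> B"
  have "{k. X k = x} \<subseteq> \<Union>(C ` {n. exc_start B U X n})"
  proof
    fix k assume "k \<in> {k. X k = x}"
    then have "X k = x" by simp
    with coverage[OF finS BU, of k] xB obtain n where
      "exc_start B U X n" "n \<le> k" "\<forall>j. n \<le> j \<and> j \<le> k \<longrightarrow> X j \<in> U" by auto
    then show "k \<in> \<Union>(C ` {n. exc_start B U X n})" using \<open>X k = x\<close> by (auto simp: C_def)
  qed
  with sub have "\<Union>(C ` {n. exc_start B U X n}) = {k. X k = x}" by blast
  then show "(\<Sum>n\<in>{n. exc_start B U X n}. exc_time U X \<sigma> n x) = (\<Sum>k\<in>{k. X k = x}. \<sigma> k)"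
    using eq by simp
qed


lemma wf_traj:
  assumes "wf_config \<omega>" "(v, X, \<sigma>) \<in> \<omega>"
  shows "(\<forall>n. 0 < \<sigma> n) \<and> (\<forall>y. finite {n. X n = y})"
  using assms unfolding wf_config_def by fastforce

lemma wf_label:
  assumes "wf_config \<omega>" "p \<in> \<omega>" "q \<in> \<omega>" "fst p = fst q"
  shows "p = q"
  using assms unfolding wf_config_def by blast

lemma wf_fin:
  assumes "wf_config \<omega>"
  shows "finite {p \<in> \<omega>. fst p \<le> u \<and> x \<in> range (fst (snd p))}"
  using assms unfolding wf_config_def by blast

definition Om :: "('d::finite) config \<Rightarrow> (int ^ 'd) set \<Rightarrow> real \<Rightarrow> _" where
  "Om \<omega> B u = {p \<in> \<omega>. fst p \<le> u \<and> (\<exists>n. fst (snd p) n \<in> B)}"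

definition EU :: "('d::finite) config \<Rightarrow> (int ^ 'd) set \<Rightarrow> (int ^ 'd) set \<Rightarrow> real \<Rightarrow> _" where
  "EU \<omega> B U u = {e \<in> excs \<omega> B U. fst e \<le> u}"

definition et :: "(int ^ 'd) set \<Rightarrow> real \<times> (int \<Rightarrow> int ^ 'd) \<times> (int \<Rightarrow> real) \<times> int \<Rightarrow> int ^ 'd \<Rightarrow> real" where
  "et U e x = exc_time U (fst (snd e)) (fst (snd (snd e))) (snd (snd (snd e))) x"

lemma fin_Om:
  assumes "wf_config \<omega>" "finite B"
  shows "finite (Om \<omega> B u)"
proof -
  have "Om \<omega> B u = (\<Union>y\<in>B. {p \<in> \<omega>. fst p \<le> u \<and> y \<in> range (fst (snd p))})"
    by (auto simp: Om_def)
  then show ?thesis using assms(2) by (simp add: wf_fin[OF assms(1)])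
qed

lemma EU_eq:
  "EU \<omega> B U u = (\<lambda>(p, n). (fst p, fst (snd p), snd (snd p), n)) `
      (SIGMA p:Om \<omega> B u. {n. exc_start B U (fst (snd p)) n})"
  unfolding EU_def excs_def Om_def
  by (force simp: exc_start_def image_iff)

lemma fin_starts:
  assumes "wf_config \<omega>" "finite B" "p \<in> \<omega>"
  shows "finite {n. exc_start B U (fst (snd p)) n}"
proof -
  obtain v X \<sigma> where p: "p = (v, X, \<sigma>)" by (cases p) auto
  have fin: "\<forall>y. finite {n. X n = y}" using wf_traj[OF assms(1)] assms(3) p by blast
  have "{n. X n \<in> B} = (\<Union>y\<in>B. {n. X n = y})" by auto
  then have "finite {n. X n \<in> B}" using assms(2) fin by simp
  then show ?thesis by (rule finite_subset[rotated]) (auto simp: p exc_start_def)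
qed

lemma fin_EU:
  assumes "wf_config \<omega>" "finite B"
  shows "finite (EU \<omega> B U u)"
  unfolding EU_eq
  by (rule finite_imageI, rule finite_SigmaI)
     (use fin_Om[OF assms] fin_starts[OF assms] in \<open>auto simp: Om_def\<close>)

lemma S_eq:
  assumes "wf_config \<omega>" "finite B"
  shows "(\<Sum>e\<in>EU \<omega> B U u. et U e x) =
    (\<Sum>p\<in>Om \<omega> B u. \<Sum>n\<in>{n. exc_start B U (fst (snd p)) n}. exc_time U (fst (snd p)) (snd (snd p)) n x)"
proof -
  have inj: "inj_on (\<lambda>(p, n). (fst p, fst (snd p), snd (snd p), n))
      (SIGMA p:Om \<omega> B u. {n. exc_start B U (fst (snd p)) n})"
    by (auto simp: inj_on_def prod_eq_iff)
  show ?thesis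
    unfolding EU_eq sum.reindex[OF inj]
    by (subst sum.Sigma) (use fin_Om[OF assms] fin_starts[OF assms] in \<open>auto simp: Om_def et_def split_beta\<close>)
qed

lemma occ_eq:
  "occ \<omega> u x = (\<Sum>p\<in>{p \<in> \<omega>. fst p \<le> u \<and> x \<in> range (fst (snd p))}. sum (snd (snd p)) {k. fst (snd p) k = x})"
  unfolding occ_def by (rule sum.cong) (auto simp: split_beta)

lemma S_occ:
  fixes \<omega> :: "('d::finite) config"
  assumes wf: "wf_config \<omega>" and finB: "finite B" and BU: "B \<subseteq> U"
  shows "(\<Sum>e\<in>EU \<omega> B U u. et U e x) \<le> occ \<omega> u x"
    and "x \<in> B \<Longrightarrow> (\<Sum>e\<in>EU \<omega> B U u. et U e x) = occ \<omega> u x"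
proof -
  define W where "W = {p \<in> \<omega>. fst p \<le> u \<and> x \<in> range (fst (snd p))}"
  define h where "h (p::real \<times> (int \<Rightarrow> int ^ 'd) \<times> (int \<Rightarrow> real)) = (\<Sum>n\<in>{n. exc_start B U (fst (snd p)) n}. exc_time U (fst (snd p)) (snd (snd p)) n x)" for p
  define g where "g (p::real \<times> (int \<Rightarrow> int ^ 'd) \<times> (int \<Rightarrow> real)) = sum (snd (snd p)) {k. fst (snd p) k = x}" for p
  have finW: "finite W" using wf_fin[OF wf] by (simp add: W_def)
  have finO: "finite (Om \<omega> B u)" using fin_Om[OF wf finB] .
  have S: "(\<Sum>e\<in>EU \<omega> B U u. et U e x) = sum h (Om \<omega> B u)"
    unfolding h_def using S_eq[OF wf finB] .
  have O: "occ \<omega> u x = sum g W" unfolding occ_eq W_def g_def ..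
  have tr: "h p \<le> g p" "x \<in> B \<Longrightarrow> h p = g p" if "p \<in> \<omega>" for p
  proof -
    obtain v X \<sigma> where p: "p = (v, X, \<sigma>)" by (cases p) auto
    have "(\<forall>n. 0 < \<sigma> n) \<and> (\<forall>y. finite {n. X n = y})" using wf_traj[OF wf] that p by blast
    then show "h p \<le> g p" "x \<in> B \<Longrightarrow> h p = g p"
      using traj_lemma[OF finB BU, of X \<sigma> x] by (auto simp: h_def g_def p)
  qed
  have h0: "h p = 0" if "p \<notin> W" "p \<in> \<omega>" "fst p \<le> u" for p
  proof -
    have "\<forall>k. fst (snd p) k \<noteq> x" using that by (auto simp: W_def)
    then show ?thesis by (simp add: h_def exc_time_def)
  qed
  have gnn: "0 \<le> g p" if "p \<in> \<omega>" for p
  proof -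
    obtain v X \<sigma> where p: "p = (v, X, \<sigma>)" by (cases p) auto
    have "\<forall>n. 0 < \<sigma> n" using wf_traj[OF wf] that p by blast
    then show ?thesis by (auto simp: g_def p intro: sum_nonneg less_imp_le)
  qed
  have "sum h (Om \<omega> B u) = sum h (Om \<omega> B u \<inter> W)"
    by (rule sum.mono_neutral_right) (use finO h0 in \<open>auto simp: Om_def\<close>)
  also have "\<dots> \<le> sum g (Om \<omega> B u \<inter> W)"
    by (rule sum_mono) (use tr in \<open>auto simp: W_def\<close>)
  also have "\<dots> \<le> sum g W"
    by (rule sum_mono2[OF finW]) (use gnn in \<open>auto simp: W_def\<close>)
  finally show "(\<Sum>e\<in>EU \<omega> B U u. et U e x) \<le> occ \<omega> u x" using S O by simp
  assume xB: "x \<in> B"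
  have WO: "W \<subseteq> Om \<omega> B u" using xB by (auto simp: W_def Om_def)
  have "sum h (Om \<omega> B u) = sum h W"
    by (rule sum.mono_neutral_right) (use finO h0 WO in \<open>auto simp: Om_def\<close>)
  also have "\<dots> = sum g W"
    by (rule sum.cong) (use tr xB in \<open>auto simp: W_def\<close>)
  finally show "(\<Sum>e\<in>EU \<omega> B U u. et U e x) = occ \<omega> u x" using S O by simp
qed


context
  fixes \<omega> :: "('d::finite) config" and B U :: "(int ^ 'd) set"
  assumes wf: "wf_config \<omega>" and finB: "finite B" and BU: "B \<subseteq> U"
begin

lemma et_nonneg: "e \<in> excs \<omega> B U \<Longrightarrow> 0 \<le> et U e x"
proof -
  assume "e \<in> excs \<omega> B U"
  then obtain v X \<sigma> n where e: "e = (v, X, \<sigma>, n)" "(v, X, \<sigma>) \<in> \<omega>"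
    unfolding excs_def by auto
  then have "\<forall>n. 0 < \<sigma> n" using wf_traj[OF wf] by blast
  then show ?thesis by (auto simp: et_def e exc_time_def intro: sum_nonneg less_imp_le)
qed

lemma before_sub: "{e' \<in> excs \<omega> B U. exc_before e' e} \<subseteq> EU \<omega> B U (fst e)"
  by (auto simp: EU_def exc_before_def)

lemma before_fin: "finite {e' \<in> excs \<omega> B U. exc_before e' e}"
  by (rule finite_subset[OF before_sub fin_EU[OF wf finB]])

lemma total:
  assumes "e \<in> excs \<omega> B U" "e' \<in> excs \<omega> B U" "e \<noteq> e'"
  shows "exc_before e e' \<or> exc_before e' e"
proof -
  obtain v X \<sigma> n where e: "e = (v, X, \<sigma>, n)" "(v, X, \<sigma>) \<in> \<omega>"
    using assms(1) unfolding excs_def by auto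
  obtain v' X' \<sigma>' n' where e': "e' = (v', X', \<sigma>', n')" "(v', X', \<sigma>') \<in> \<omega>"
    using assms(2) unfolding excs_def by auto
  show ?thesis
  proof (cases "v = v'")
    case True
    then have "(v, X, \<sigma>) = (v', X', \<sigma>')" using wf_label[OF wf e(2) e'(2)] by simp
    then have "n \<noteq> n'" using assms(3) e e' by auto
    then show ?thesis using True e e' by (auto simp: exc_before_def)
  next
    case False
    then show ?thesis using e e' by (auto simp: exc_before_def)
  qed
qed

lemma before_trans: "exc_before a b \<Longrightarrow> exc_before b c \<Longrightarrow> exc_before a c"
  by (auto simp: exc_before_def)

lemma fin_first: "finite (first_excs \<omega> B U a)"
proof -
  define f where "f e = card {e' \<in> excs \<omega> B U. exc_before e' e}" for e
  have inj: "inj_on f (excs \<omega> B U)"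
  proof (rule inj_onI, rule ccontr)
    fix e e' assume ee: "e \<in> excs \<omega> B U" "e' \<in> excs \<omega> B U" "f e = f e'" "e \<noteq> e'"
    have *: "f x < f y" if "x \<in> excs \<omega> B U" "exc_before x y" for x y
      unfolding f_def
    proof (rule psubset_card_mono[OF before_fin])
      show "{e' \<in> excs \<omega> B U. exc_before e' x} \<subset> {e' \<in> excs \<omega> B U. exc_before e' y}"
      proof -
        have sub: "{e' \<in> excs \<omega> B U. exc_before e' x} \<subseteq> {e' \<in> excs \<omega> B U. exc_before e' y}"
          using before_trans[OF _ that(2)] by blast
        have "x \<in> {e' \<in> excs \<omega> B U. exc_before e' y}" using that by simp
        moreover have "x \<notin> {e' \<in> excs \<omega> B U. exc_before e' x}" by (simp add: exc_before_def)
        ultimately show ?thesis using sub by blast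
      qed
    qed
    from total[OF ee(1,2,4)] show False using *[of e e'] *[of e' e] ee by auto
  qed
  have "f ` first_excs \<omega> B U a \<subseteq> {..nat \<lceil>a\<rceil>}"
  proof
    fix y assume "y \<in> f ` first_excs \<omega> B U a"
    then obtain e where "e \<in> first_excs \<omega> B U a" "y = f e" by blast
    then have "real y + 1 \<le> a" by (simp add: first_excs_def f_def)
    then have "real y \<le> of_int \<lceil>a\<rceil>" by linarith
    then show "y \<in> {..nat \<lceil>a\<rceil>}" by (simp add: le_nat_iff)
  qed
  then have "finite (f ` first_excs \<omega> B U a)" by (rule finite_subset) simp
  moreover have "inj_on f (first_excs \<omega> B U a)"
    by (rule inj_on_subset[OF inj]) (auto simp: first_excs_def)
  ultimately show ?thesis using finite_imageD by blast
qed

lemma Nexc_eq: "Nexc \<omega> B U u = card (EU \<omega> B U u)"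
  by (simp add: Nexc_def EU_def)

lemma first_sup:
  assumes "real (Nexc \<omega> B U u) \<le> a"
  shows "EU \<omega> B U u \<subseteq> first_excs \<omega> B U a"
proof
  fix e assume e: "e \<in> EU \<omega> B U u"
  have sub: "{e' \<in> excs \<omega> B U. exc_before e' e} \<subseteq> EU \<omega> B U u - {e}"
    using e by (auto simp: EU_def exc_before_def)
  have fin: "finite (EU \<omega> B U u)" using fin_EU[OF wf finB] .
  have "card {e' \<in> excs \<omega> B U. exc_before e' e} \<le> card (EU \<omega> B U u - {e})"
    by (rule card_mono[OF _ sub]) (use fin in simp)
  also have "\<dots> = card (EU \<omega> B U u) - 1" using e fin by simp
  moreover have "0 < card (EU \<omega> B U u)" using e fin card_gt_0_iff by blast
  ultimately have "card {e' \<in> excs \<omega> B U. exc_before e' e} + 1 \<le> card (EU \<omega> B U u)"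
    by linarith
  then have "real (card {e' \<in> excs \<omega> B U. exc_before e' e} + 1) \<le> real (card (EU \<omega> B U u))"
    by (simp only: of_nat_le_iff)
  then have r: "real (card {e' \<in> excs \<omega> B U. exc_before e' e}) + 1 \<le> a"
    using assms unfolding Nexc_eq by simp
  have "e \<in> excs \<omega> B U" using e by (simp add: EU_def)
  then show "e \<in> first_excs \<omega> B U a"
    using r unfolding first_excs_def by blast
qed

lemma first_sub:
  assumes "a \<le> real (Nexc \<omega> B U u)"
  shows "first_excs \<omega> B U a \<subseteq> EU \<omega> B U u"
proof
  fix e assume e: "e \<in> first_excs \<omega> B U a"
  show "e \<in> EU \<omega> B U u"
  proof (rule ccontr)
    assume "e \<notin> EU \<omega> B U u"
    moreover have "e \<in> excs \<omega> B U" using e by (simp add: first_excs_def)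
    ultimately have gt: "u < fst e" unfolding EU_def by simp
    have "EU \<omega> B U u \<subseteq> {e' \<in> excs \<omega> B U. exc_before e' e}"
      using gt by (auto simp: EU_def exc_before_def)
    then have "card (EU \<omega> B U u) \<le> card {e' \<in> excs \<omega> B U. exc_before e' e}"
      by (rule card_mono[OF before_fin])
    then have "real (Nexc \<omega> B U u) \<le> real (card {e' \<in> excs \<omega> B U. exc_before e' e})"
      by (simp add: Nexc_eq)
    moreover have "real (card {e' \<in> excs \<omega> B U. exc_before e' e}) + 1 \<le> a"
      using e by (simp add: first_excs_def)
    ultimately show False using assms by linarith
  qed
qed

lemma LB_eq: "LB \<omega> B U a x = (\<Sum>e\<in>first_excs \<omega> B U a. et U e x)"
  unfolding LB_def by (rule sum.cong) (auto simp: et_def split_beta)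

lemma LB_nonneg: "0 \<le> LB \<omega> B U a x"
  unfolding LB_eq by (rule sum_nonneg) (auto simp: first_excs_def intro: et_nonneg)

lemma occ_nonneg: "0 \<le> occ \<omega> u x"
  unfolding occ_eq
proof (rule sum_nonneg)
  fix p assume "p \<in> {p \<in> \<omega>. fst p \<le> u \<and> x \<in> range (fst (snd p))}"
  then have p: "p \<in> \<omega>" by simp
  obtain v X \<sigma> where pp: "p = (v, X, \<sigma>)" by (cases p) auto
  have "\<forall>n. 0 < \<sigma> n" using wf_traj[OF wf] p pp by blast
  then show "0 \<le> sum (snd (snd p)) {k. fst (snd p) k = x}"
    by (auto simp: pp intro: sum_nonneg less_imp_le)
qed

lemma LB_upper:
  assumes "real (Nexc \<omega> B U u) \<le> a" "x \<in> B"
  shows "occ \<omega> u x \<le> LB \<omega> B U a x"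
proof -
  have "occ \<omega> u x = (\<Sum>e\<in>EU \<omega> B U u. et U e x)" using S_occ(2)[OF wf finB BU assms(2)] by simp
  also have "\<dots> \<le> (\<Sum>e\<in>first_excs \<omega> B U a. et U e x)"
    by (rule sum_mono2[OF fin_first first_sup[OF assms(1)]]) (auto simp: first_excs_def intro: et_nonneg)
  finally show ?thesis by (simp add: LB_eq)
qed

lemma LB_lower:
  assumes "a \<le> real (Nexc \<omega> B U u)"
  shows "LB \<omega> B U a x \<le> occ \<omega> u x"
proof -
  have "LB \<omega> B U a x = (\<Sum>e\<in>first_excs \<omega> B U a. et U e x)" by (simp add: LB_eq)
  also have "\<dots> \<le> (\<Sum>e\<in>EU \<omega> B U u. et U e x)"
    by (rule sum_mono2[OF fin_EU[OF wf finB] first_sub[OF assms(1)]]) (auto simp: EU_def intro: et_nonneg)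
  also have "\<dots> \<le> occ \<omega> u x" using S_occ(1)[OF wf finB BU] .
  finally show ?thesis .
qed

end


lemma fin_boxB: "finite (boxB L (z :: int ^ 'd::finite))"
proof -
  have "boxB L z \<subseteq> vec_lambda ` (PiE UNIV (\<lambda>i. {z $ i..<z $ i + L}))"
  proof
    fix x assume x: "x \<in> boxB L z"
    have "(\<lambda>i. x $ i) \<in> PiE UNIV (\<lambda>i. {z $ i..<z $ i + L})" using x by (auto simp: boxB_def)
    then show "x \<in> vec_lambda ` (PiE UNIV (\<lambda>i. {z $ i..<z $ i + L}))"
      by (rule rev_image_eqI) simp
  qed
  moreover have "finite (PiE UNIV (\<lambda>i. {z $ i..<z $ i + L}))" by (rule finite_PiE) auto
  ultimately show ?thesis by (rule finite_subset[OF _ finite_imageI])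
qed

lemma boxB_sub_U:
  assumes "L \<ge> 1" "K \<ge> 100"
  shows "boxB L z \<subseteq> boxU K L z"
proof -
  have "K * L \<ge> 100 * L" using assms by (intro mult_right_mono) auto
  then have kl: "K * L \<ge> 100 * L" .
  show ?thesis unfolding boxB_def boxU_def
  proof (intro subsetI CollectI allI)
    fix x i assume "x \<in> {x. \<forall>i. z $ i \<le> x $ i \<and> x $ i < z $ i + L}"
    then have "z $ i \<le> x $ i" "x $ i < z $ i + L" by auto
    then show "z $ i - K * L + 1 \<le> x $ i \<and> x $ i < z $ i + K * L - 1" using kl assms by linarith
  qed
qed

lemma supnorm0: "supnorm (0 :: int ^ 'd::finite) = 0"
  by (simp add: supnorm_def)

lemma Floc_F0: "Floc F0 0 l = l (0 :: int ^ 'd::finite)"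
  by (simp add: Floc_def F0_def ballinf_def supnorm0)

lemma pairing_mono:
  assumes "\<And>x. x \<in> A \<Longrightarrow> 0 \<le> \<rho> x" "\<And>x. x \<in> A \<Longrightarrow> l x \<le> l' x"
  shows "pairing \<rho> A l \<le> pairing \<rho> A l'"
  unfolding pairing_def by (rule sum_mono) (use assms in \<open>auto intro: mult_left_mono\<close>)

lemma pairing_unif: "pairing (unif_meas A) A l = sum l A / real (card A)"
  unfolding pairing_def unif_meas_def by (simp add: sum_divide_distrib)

lemma eq_measure_nonneg: "0 \<le> eq_measure A x"
proof -
  have "0 \<le> noreturn_prob A x n" for n unfolding noreturn_prob_def by simp
  then have "0 \<le> escape_prob A x" unfolding escape_prob_def by (intro cINF_greatest) auto
  then show ?thesis by (simp add: eq_measure_def)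
qed

lemma cap_nonneg: "0 \<le> cap A"
  unfolding cap_def by (rule sum_nonneg) (simp add: eq_measure_nonneg)

lemma eq_bar_nonneg: "0 \<le> eq_bar A x"
  unfolding eq_bar_def using eq_measure_nonneg cap_nonneg by (rule divide_nonneg_nonneg)

lemma unif_nonneg: "0 \<le> unif_meas A x"
  unfolding unif_meas_def by simp


lemma shift_in: "x \<in> B_R R B \<Longrightarrow> y \<in> ballinf 0 (int R) \<Longrightarrow> x + y \<in> B"
  unfolding B_R_def ballinf_def by auto

lemma part1:
  fixes F :: "(int ^ 'd \<Rightarrow> real) \<Rightarrow> real" and \<omega> :: "('d::finite) config"
    and B U :: "(int ^ 'd) set"
  assumes wf: "wf_config \<omega>" and finB: "finite B" and BU: "B \<subseteq> U"
    and lf: "local_function F R P"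
    and gd: "good F R P \<omega> B U \<Sigma> \<kappa> \<mu>" and \<alpha>: "\<alpha> \<in> \<Sigma>" and \<Sigma>pos: "\<Sigma> \<subseteq> {0<..}"
    and \<kappa>1: "\<kappa> < 1"
  shows "real (Nexc \<omega> B U u) / cap B \<le> \<alpha> \<longrightarrow>
         pairing (eq_bar B) B (occ \<omega> u) < (1 + \<kappa>) * \<alpha> \<and>
         pairing (unif_meas B) B (occ \<omega> u) < (1 + \<kappa>) * \<alpha> \<and>
         (\<Sum>x\<in>B_R R B. Floc F R (\<lambda>y. occ \<omega> u (x + y))) / real (card B)
           < theta F R P ((1 + \<kappa>) * \<alpha>) + \<mu>"
    and "real (Nexc \<omega> B U u) / cap B \<ge> \<alpha> \<longrightarrow>
         pairing (eq_bar B) B (occ \<omega> u) > (1 - \<kappa>) * \<alpha> \<and>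
         pairing (unif_meas B) B (occ \<omega> u) > (1 - \<kappa>) * \<alpha> \<and>
         (\<Sum>x\<in>B. Floc F R (\<lambda>y. occ \<omega> u (x + y))) / real (card B)
           > theta F R P ((1 - \<kappa>) * \<alpha>) - \<mu>"
proof -
  have nb: "\<not> bad_alpha F R (theta F R P) \<omega> B U \<alpha> \<kappa> \<mu>" "\<not> bad_alpha F0 0 (\<lambda>u. u) \<omega> B U \<alpha> \<kappa> 0"
    using gd \<alpha> unfolding good_def bad_def by auto
  define a where "a = \<alpha> * cap B"
  from nb have g1: "\<alpha> * (1 - \<kappa>) < pairing (eq_bar B) B (LB \<omega> B U a)"
       "pairing (eq_bar B) B (LB \<omega> B U a) < \<alpha> * (1 + \<kappa>)"
    and g2: "theta F R P (\<alpha> * (1 - \<kappa>)) - \<mu> < FB F R \<omega> B U a / real (card B)"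
       "FB F R \<omega> B U a / real (card B) < theta F R P (\<alpha> * (1 + \<kappa>)) + \<mu>"
    and g3: "\<alpha> * (1 - \<kappa>) < FB F0 0 \<omega> B U a / real (card B)"
       "FB F0 0 \<omega> B U a / real (card B) < \<alpha> * (1 + \<kappa>)"
    unfolding bad_alpha_def a_def by auto
  have \<alpha>pos: "0 < \<alpha>" using \<alpha> \<Sigma>pos by auto
  have pk: "0 < \<alpha> * (1 - \<kappa>)" using \<alpha>pos \<kappa>1 by simp
  have cappos: "0 < cap B"
  proof (rule ccontr)
    assume "\<not> 0 < cap B"
    then have "cap B = 0" using cap_nonneg[of B] by simp
    then have "pairing (eq_bar B) B (LB \<omega> B U a) = 0" by (simp add: pairing_def eq_bar_def)
    then show False using g1(1) pk by simp
  qed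
  have FB0: "FB F0 0 \<omega> B U a = sum (LB \<omega> B U a) B" by (simp add: FB_def Floc_F0)
  have mono: "\<And>(l :: int ^ 'd \<Rightarrow> real) l'. (\<forall>y\<in>ballinf 0 (int R). 0 \<le> l y \<and> l y \<le> l' y) \<Longrightarrow> Floc F R l \<le> Floc F R l'"
    and nn: "\<And>l :: int ^ 'd \<Rightarrow> real. (\<forall>y\<in>ballinf 0 (int R). 0 \<le> l y) \<Longrightarrow> 0 \<le> Floc F R l"
    using lf unfolding local_function_def by blast+
  have cB: "0 \<le> real (card B)" by simp
  have c1: "\<alpha> * (1 + \<kappa>) = (1 + \<kappa>) * \<alpha>" "\<alpha> * (1 - \<kappa>) = (1 - \<kappa>) * \<alpha>" by simp_all
  show "real (Nexc \<omega> B U u) / cap B \<le> \<alpha> \<longrightarrow>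
         pairing (eq_bar B) B (occ \<omega> u) < (1 + \<kappa>) * \<alpha> \<and>
         pairing (unif_meas B) B (occ \<omega> u) < (1 + \<kappa>) * \<alpha> \<and>
         (\<Sum>x\<in>B_R R B. Floc F R (\<lambda>y. occ \<omega> u (x + y))) / real (card B)
           < theta F R P ((1 + \<kappa>) * \<alpha>) + \<mu>"
  proof
    assume "real (Nexc \<omega> B U u) / cap B \<le> \<alpha>"
    then have hN: "real (Nexc \<omega> B U u) \<le> a" using cappos by (simp add: a_def pos_divide_le_eq)
    have up: "\<And>x. x \<in> B \<Longrightarrow> occ \<omega> u x \<le> LB \<omega> B U a x" using LB_upper[OF wf finB BU hN] .
    have "pairing (eq_bar B) B (occ \<omega> u) \<le> pairing (eq_bar B) B (LB \<omega> B U a)"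
      by (rule pairing_mono) (use up eq_bar_nonneg in auto)
    then have r1: "pairing (eq_bar B) B (occ \<omega> u) < (1 + \<kappa>) * \<alpha>" using g1(2) c1 by linarith
    have "sum (occ \<omega> u) B \<le> sum (LB \<omega> B U a) B" by (rule sum_mono) (use up in auto)
    then have "sum (occ \<omega> u) B / real (card B) \<le> sum (LB \<omega> B U a) B / real (card B)"
      by (rule divide_right_mono[OF _ cB])
    then have r2: "pairing (unif_meas B) B (occ \<omega> u) < (1 + \<kappa>) * \<alpha>"
      using g3(2) c1 FB0 by (simp add: pairing_unif)
    have BRB: "B_R R B \<subseteq> B" by (auto simp: B_R_def)
    have "(\<Sum>x\<in>B_R R B. Floc F R (\<lambda>y. occ \<omega> u (x + y))) \<le> (\<Sum>x\<in>B_R R B. Floc F R (\<lambda>y. LB \<omega> B U a (x + y)))"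
    proof (rule sum_mono, rule mono, intro ballI conjI)
      fix x y :: "int ^ 'd" assume "x \<in> B_R R B" "y \<in> ballinf 0 (int R)"
      then have "x + y \<in> B" by (rule shift_in)
      then show "0 \<le> occ \<omega> u (x + y)" "occ \<omega> u (x + y) \<le> LB \<omega> B U a (x + y)"
        using occ_nonneg[OF wf finB BU] up by auto
    qed
    also have "\<dots> \<le> (\<Sum>x\<in>B. Floc F R (\<lambda>y. LB \<omega> B U a (x + y)))"
      by (rule sum_mono2[OF finB BRB]) (use nn LB_nonneg[OF wf finB BU] in auto)
    also have "\<dots> = FB F R \<omega> B U a" by (simp add: FB_def)
    finally have "(\<Sum>x\<in>B_R R B. Floc F R (\<lambda>y. occ \<omega> u (x + y))) / real (card B) \<le> FB F R \<omega> B U a / real (card B)"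
      by (rule divide_right_mono[OF _ cB])
    then have r3: "(\<Sum>x\<in>B_R R B. Floc F R (\<lambda>y. occ \<omega> u (x + y))) / real (card B)
           < theta F R P ((1 + \<kappa>) * \<alpha>) + \<mu>" using g2(2) c1 by simp
    show "pairing (eq_bar B) B (occ \<omega> u) < (1 + \<kappa>) * \<alpha> \<and>
         pairing (unif_meas B) B (occ \<omega> u) < (1 + \<kappa>) * \<alpha> \<and>
         (\<Sum>x\<in>B_R R B. Floc F R (\<lambda>y. occ \<omega> u (x + y))) / real (card B)
           < theta F R P ((1 + \<kappa>) * \<alpha>) + \<mu>" using r1 r2 r3 by blast
  qed
  show "real (Nexc \<omega> B U u) / cap B \<ge> \<alpha> \<longrightarrow>
         pairing (eq_bar B) B (occ \<omega> u) > (1 - \<kappa>) * \<alpha> \<and>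
         pairing (unif_meas B) B (occ \<omega> u) > (1 - \<kappa>) * \<alpha> \<and>
         (\<Sum>x\<in>B. Floc F R (\<lambda>y. occ \<omega> u (x + y))) / real (card B)
           > theta F R P ((1 - \<kappa>) * \<alpha>) - \<mu>"
  proof
    assume "real (Nexc \<omega> B U u) / cap B \<ge> \<alpha>"
    then have hN: "a \<le> real (Nexc \<omega> B U u)" using cappos by (simp add: a_def pos_le_divide_eq)
    have lo: "\<And>x. LB \<omega> B U a x \<le> occ \<omega> u x" using LB_lower[OF wf finB BU hN] .
    have "pairing (eq_bar B) B (LB \<omega> B U a) \<le> pairing (eq_bar B) B (occ \<omega> u)"
      by (rule pairing_mono) (use lo eq_bar_nonneg in auto)
    then have r1: "pairing (eq_bar B) B (occ \<omega> u) > (1 - \<kappa>) * \<alpha>" using g1(1) c1 by linarith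
    have "sum (LB \<omega> B U a) B \<le> sum (occ \<omega> u) B" by (rule sum_mono) (use lo in auto)
    then have "sum (LB \<omega> B U a) B / real (card B) \<le> sum (occ \<omega> u) B / real (card B)"
      by (rule divide_right_mono[OF _ cB])
    then have r2: "pairing (unif_meas B) B (occ \<omega> u) > (1 - \<kappa>) * \<alpha>"
      using g3(1) c1 FB0 by (simp add: pairing_unif)
    have "FB F R \<omega> B U a \<le> (\<Sum>x\<in>B. Floc F R (\<lambda>y. occ \<omega> u (x + y)))"
      unfolding FB_def
    proof (rule sum_mono, rule mono, intro ballI conjI)
      fix x y :: "int ^ 'd"
      show "0 \<le> LB \<omega> B U a (x + y)" "LB \<omega> B U a (x + y) \<le> occ \<omega> u (x + y)"
        using LB_nonneg[OF wf finB BU] lo by auto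
    qed
    then have "FB F R \<omega> B U a / real (card B) \<le> (\<Sum>x\<in>B. Floc F R (\<lambda>y. occ \<omega> u (x + y))) / real (card B)"
      by (rule divide_right_mono[OF _ cB])
    then have r3: "(\<Sum>x\<in>B. Floc F R (\<lambda>y. occ \<omega> u (x + y))) / real (card B)
           > theta F R P ((1 - \<kappa>) * \<alpha>) - \<mu>" using g2(1) c1 by simp
    show "pairing (eq_bar B) B (occ \<omega> u) > (1 - \<kappa>) * \<alpha> \<and>
         pairing (unif_meas B) B (occ \<omega> u) > (1 - \<kappa>) * \<alpha> \<and>
         (\<Sum>x\<in>B. Floc F R (\<lambda>y. occ \<omega> u (x + y))) / real (card B)
           > theta F R P ((1 - \<kappa>) * \<alpha>) - \<mu>" using r1 r2 r3 by blast
  qed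
qed


lemma sep_arith:
  fixes a1 a2 a3 a b \<kappa> :: real and \<Sigma> :: "real set"
  assumes fin: "finite \<Sigma>" and sep: "\<forall>s\<in>\<Sigma>. \<Sigma> \<inter> {(1 - \<kappa>) * s <..< (1 + \<kappa>) * s} = {s}"
    and \<kappa>: "0 < \<kappa>" and pos: "\<Sigma> \<subseteq> {0<..}"
    and h1: "\<forall>s\<in>\<Sigma>. a1 \<le> s \<longrightarrow> a2 < (1 + \<kappa>) * s \<and> a3 < (1 + \<kappa>) * s"
    and h2: "\<forall>s\<in>\<Sigma>. a1 \<ge> s \<longrightarrow> a2 > (1 - \<kappa>) * s \<and> a3 > (1 - \<kappa>) * s"
    and ab: "a \<in> {a1, a2, a3}" "b \<in> {a1, a2, a3}"
  shows "card {s \<in> \<Sigma>. min a b \<le> s \<and> s \<le> max a b} \<le> 2"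
proof (rule ccontr)
  define S where "S = {s \<in> \<Sigma>. min a b \<le> s \<and> s \<le> max a b}"
  assume "\<not> card {s \<in> \<Sigma>. min a b \<le> s \<and> s \<le> max a b} \<le> 2"
  then have c3: "card S \<ge> 3" by (simp add: S_def)
  have finS: "finite S" using fin by (simp add: S_def)
  have ne: "S \<noteq> {}" using c3 by auto
  define s1 where "s1 = Min S"
  define s3 where "s3 = Max S"
  have s1S: "s1 \<in> S" and s3S: "s3 \<in> S" using Min_in[OF finS ne] Max_in[OF finS ne] by (simp_all add: s1_def s3_def)
  have "card S - card {s1, s3} \<le> card (S - {s1, s3})" by (rule diff_card_le_card_Diff) simp
  moreover have "card {s1, s3} \<le> 2" by (rule card_insert_le_m1) auto
  ultimately have "card (S - {s1, s3}) \<ge> 1" using c3 by linarith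
  then have "S - {s1, s3} \<noteq> {}" by (cases "S - {s1, s3} = {}") auto
  then obtain s2 where s2: "s2 \<in> S" "s2 \<noteq> s1" "s2 \<noteq> s3" by blast
  have "s1 \<le> s2" "s2 \<le> s3" using Min_le[OF finS s2(1)] Max_ge[OF finS s2(1)] by (simp_all add: s1_def s3_def)
  then have lt: "s1 < s2" "s2 < s3" using s2 by auto
  have s2\<Sigma>: "s2 \<in> \<Sigma>" and s1\<Sigma>: "s1 \<in> \<Sigma>" and s3\<Sigma>: "s3 \<in> \<Sigma>" using s2 s1S s3S by (auto simp: S_def)
  have s2p: "0 < s2" using pos s2\<Sigma> by auto
  have sepS: "\<Sigma> \<inter> {(1 - \<kappa>) * s2 <..< (1 + \<kappa>) * s2} = {s2}" using sep s2\<Sigma> by blast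
  have "s3 \<notin> {(1 - \<kappa>) * s2 <..< (1 + \<kappa>) * s2}" using sepS s3\<Sigma> lt by auto
  moreover have "(1 - \<kappa>) * s2 < s2" using \<kappa> s2p by simp
  ultimately have s3b: "(1 + \<kappa>) * s2 \<le> s3" using lt by auto
  have "s1 \<notin> {(1 - \<kappa>) * s2 <..< (1 + \<kappa>) * s2}" using sepS s1\<Sigma> lt by auto
  moreover have "s2 < (1 + \<kappa>) * s2" using \<kappa> s2p by simp
  ultimately have s1b: "s1 \<le> (1 - \<kappa>) * s2" using lt by auto
  have lo: "min a b \<le> s1" and hi: "s3 \<le> max a b" using s1S s3S by (auto simp: S_def)
  show False
  proof (cases "a1 \<le> s2")
    case True
    moreover have "a2 < (1 + \<kappa>) * s2 \<and> a3 < (1 + \<kappa>) * s2" using h1 s2\<Sigma> True by blast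
    ultimately have "a1 < s3" "a2 < s3" "a3 < s3" using s3b lt by linarith+
    then have "max a b < s3" using ab by auto
    then show False using hi by (auto simp: le_max_iff_disj)
  next
    case False
    moreover have "a2 > (1 - \<kappa>) * s2 \<and> a3 > (1 - \<kappa>) * s2" using h2 s2\<Sigma> False by auto
    ultimately have "s1 < a1" "s1 < a2" "s1 < a3" using s1b lt by linarith+
    then have "s1 < min a b" using ab by auto
    then show False using lo by (auto simp: min_le_iff_disj)
  qed
qed


theorem lemma2p4:
  fixes F :: "(int ^ 'd \<Rightarrow> real) \<Rightarrow> real" and R :: nat
    and P :: "'d config measure" and \<omega> :: "'d config"
    and \<Sigma> :: "real set" and \<kappa> \<mu> :: real and L K :: int and z :: "int ^ 'd"
  assumes "CARD('d) \<ge> 3"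
    and "prob_space P" and "local_function F R P"
    and "finite \<Sigma>" and "\<Sigma> \<noteq> {}" and "\<Sigma> \<subseteq> {0<..}"
    and "0 < \<kappa>" and "\<kappa> < 1" and "0 \<le> \<mu>"
    and "L \<ge> 1" and "K \<ge> 100" and "\<forall>i. L dvd z $ i"
    and "wf_config \<omega>"
  shows
   "(\<forall>u>0. \<forall>\<alpha>\<in>\<Sigma>.
      (good F R P \<omega> (boxB L z) (boxU K L z) \<Sigma> \<kappa> \<mu> \<and>
       real (Nexc \<omega> (boxB L z) (boxU K L z) u) / cap (boxB L z) \<le> \<alpha> \<longrightarrow>
         pairing (eq_bar (boxB L z)) (boxB L z) (occ \<omega> u) < (1 + \<kappa>) * \<alpha> \<and>
         pairing (unif_meas (boxB L z)) (boxB L z) (occ \<omega> u) < (1 + \<kappa>) * \<alpha> \<and>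
         (\<Sum>x\<in>B_R R (boxB L z). Floc F R (\<lambda>y. occ \<omega> u (x + y))) / real (card (boxB L z))
           < theta F R P ((1 + \<kappa>) * \<alpha>) + \<mu>) \<and>
      (good F R P \<omega> (boxB L z) (boxU K L z) \<Sigma> \<kappa> \<mu> \<and>
       real (Nexc \<omega> (boxB L z) (boxU K L z) u) / cap (boxB L z) \<ge> \<alpha> \<longrightarrow>
         pairing (eq_bar (boxB L z)) (boxB L z) (occ \<omega> u) > (1 - \<kappa>) * \<alpha> \<and>
         pairing (unif_meas (boxB L z)) (boxB L z) (occ \<omega> u) > (1 - \<kappa>) * \<alpha> \<and>
         (\<Sum>x\<in>boxB L z. Floc F R (\<lambda>y. occ \<omega> u (x + y))) / real (card (boxB L z))
           > theta F R P ((1 - \<kappa>) * \<alpha>) - \<mu>)) \<and>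
    ((\<forall>\<alpha>\<in>\<Sigma>. \<Sigma> \<inter> {(1 - \<kappa>) * \<alpha> <..< (1 + \<kappa>) * \<alpha>} = {\<alpha>}) \<longrightarrow>
       good F R P \<omega> (boxB L z) (boxU K L z) \<Sigma> \<kappa> \<mu> \<longrightarrow>
       (\<forall>u>0. \<forall>a\<in>{real (Nexc \<omega> (boxB L z) (boxU K L z) u) / cap (boxB L z),
                   pairing (eq_bar (boxB L z)) (boxB L z) (occ \<omega> u),
                   pairing (unif_meas (boxB L z)) (boxB L z) (occ \<omega> u)}.
              \<forall>b\<in>{real (Nexc \<omega> (boxB L z) (boxU K L z) u) / cap (boxB L z),
                   pairing (eq_bar (boxB L z)) (boxB L z) (occ \<omega> u),
                   pairing (unif_meas (boxB L z)) (boxB L z) (occ \<omega> u)}.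
                card {s \<in> \<Sigma>. min a b \<le> s \<and> s \<le> max a b} \<le> 2))"
  proof -
  have finB: "finite (boxB L z)" by (rule fin_boxB)
  have BU: "boxB L z \<subseteq> boxU K L z" using assms(10,11) by (rule boxB_sub_U)
  have I: "\<forall>u>0. \<forall>\<alpha>\<in>\<Sigma>.
      (good F R P \<omega> (boxB L z) (boxU K L z) \<Sigma> \<kappa> \<mu> \<and>
       real (Nexc \<omega> (boxB L z) (boxU K L z) u) / cap (boxB L z) \<le> \<alpha> \<longrightarrow>
         pairing (eq_bar (boxB L z)) (boxB L z) (occ \<omega> u) < (1 + \<kappa>) * \<alpha> \<and>
         pairing (unif_meas (boxB L z)) (boxB L z) (occ \<omega> u) < (1 + \<kappa>) * \<alpha> \<and>
         (\<Sum>x\<in>B_R R (boxB L z). Floc F R (\<lambda>y. occ \<omega> u (x + y))) / real (card (boxB L z))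
           < theta F R P ((1 + \<kappa>) * \<alpha>) + \<mu>) \<and>
      (good F R P \<omega> (boxB L z) (boxU K L z) \<Sigma> \<kappa> \<mu> \<and>
       real (Nexc \<omega> (boxB L z) (boxU K L z) u) / cap (boxB L z) \<ge> \<alpha> \<longrightarrow>
         pairing (eq_bar (boxB L z)) (boxB L z) (occ \<omega> u) > (1 - \<kappa>) * \<alpha> \<and>
         pairing (unif_meas (boxB L z)) (boxB L z) (occ \<omega> u) > (1 - \<kappa>) * \<alpha> \<and>
         (\<Sum>x\<in>boxB L z. Floc F R (\<lambda>y. occ \<omega> u (x + y))) / real (card (boxB L z))
           > theta F R P ((1 - \<kappa>) * \<alpha>) - \<mu>)"
  proof (intro allI impI ballI)
    fix u :: real and \<alpha> assume "0 < u" "\<alpha> \<in> \<Sigma>"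
    note p = part1[OF assms(13) finB BU assms(3) _ \<open>\<alpha> \<in> \<Sigma>\<close> assms(6) assms(8), of \<mu> u]
    show "(good F R P \<omega> (boxB L z) (boxU K L z) \<Sigma> \<kappa> \<mu> \<and>
       real (Nexc \<omega> (boxB L z) (boxU K L z) u) / cap (boxB L z) \<le> \<alpha> \<longrightarrow>
         pairing (eq_bar (boxB L z)) (boxB L z) (occ \<omega> u) < (1 + \<kappa>) * \<alpha> \<and>
         pairing (unif_meas (boxB L z)) (boxB L z) (occ \<omega> u) < (1 + \<kappa>) * \<alpha> \<and>
         (\<Sum>x\<in>B_R R (boxB L z). Floc F R (\<lambda>y. occ \<omega> u (x + y))) / real (card (boxB L z))
           < theta F R P ((1 + \<kappa>) * \<alpha>) + \<mu>) \<and>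
      (good F R P \<omega> (boxB L z) (boxU K L z) \<Sigma> \<kappa> \<mu> \<and>
       real (Nexc \<omega> (boxB L z) (boxU K L z) u) / cap (boxB L z) \<ge> \<alpha> \<longrightarrow>
         pairing (eq_bar (boxB L z)) (boxB L z) (occ \<omega> u) > (1 - \<kappa>) * \<alpha> \<and>
         pairing (unif_meas (boxB L z)) (boxB L z) (occ \<omega> u) > (1 - \<kappa>) * \<alpha> \<and>
         (\<Sum>x\<in>boxB L z. Floc F R (\<lambda>y. occ \<omega> u (x + y))) / real (card (boxB L z))
           > theta F R P ((1 - \<kappa>) * \<alpha>) - \<mu>)"
      using p by blast
  qed
  have II: "(\<forall>\<alpha>\<in>\<Sigma>. \<Sigma> \<inter> {(1 - \<kappa>) * \<alpha> <..< (1 + \<kappa>) * \<alpha>} = {\<alpha>}) \<longrightarrow>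
       good F R P \<omega> (boxB L z) (boxU K L z) \<Sigma> \<kappa> \<mu> \<longrightarrow>
       (\<forall>u>0. \<forall>a\<in>{real (Nexc \<omega> (boxB L z) (boxU K L z) u) / cap (boxB L z),
                   pairing (eq_bar (boxB L z)) (boxB L z) (occ \<omega> u),
                   pairing (unif_meas (boxB L z)) (boxB L z) (occ \<omega> u)}.
              \<forall>b\<in>{real (Nexc \<omega> (boxB L z) (boxU K L z) u) / cap (boxB L z),
                   pairing (eq_bar (boxB L z)) (boxB L z) (occ \<omega> u),
                   pairing (unif_meas (boxB L z)) (boxB L z) (occ \<omega> u)}.
                card {s \<in> \<Sigma>. min a b \<le> s \<and> s \<le> max a b} \<le> 2)"
  proof (intro impI allI)
    assume sep: "\<forall>\<alpha>\<in>\<Sigma>. \<Sigma> \<inter> {(1 - \<kappa>) * \<alpha> <..< (1 + \<kappa>) * \<alpha>} = {\<alpha>}"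
      and gd: "good F R P \<omega> (boxB L z) (boxU K L z) \<Sigma> \<kappa> \<mu>"
    fix u :: real assume "0 < u"
    note p1 = part1(1)[OF assms(13) finB BU assms(3) gd _ assms(6) assms(8), of _ u]
    note p2 = part1(2)[OF assms(13) finB BU assms(3) gd _ assms(6) assms(8), of _ u]
    have h1: "\<forall>s\<in>\<Sigma>. real (Nexc \<omega> (boxB L z) (boxU K L z) u) / cap (boxB L z) \<le> s \<longrightarrow>
        pairing (eq_bar (boxB L z)) (boxB L z) (occ \<omega> u) < (1 + \<kappa>) * s \<and>
        pairing (unif_meas (boxB L z)) (boxB L z) (occ \<omega> u) < (1 + \<kappa>) * s"
      using p1 by blast
    have h2: "\<forall>s\<in>\<Sigma>. real (Nexc \<omega> (boxB L z) (boxU K L z) u) / cap (boxB L z) \<ge> s \<longrightarrow>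
        pairing (eq_bar (boxB L z)) (boxB L z) (occ \<omega> u) > (1 - \<kappa>) * s \<and>
        pairing (unif_meas (boxB L z)) (boxB L z) (occ \<omega> u) > (1 - \<kappa>) * s"
      using p2 by blast
    show "\<forall>a\<in>{real (Nexc \<omega> (boxB L z) (boxU K L z) u) / cap (boxB L z),
                   pairing (eq_bar (boxB L z)) (boxB L z) (occ \<omega> u),
                   pairing (unif_meas (boxB L z)) (boxB L z) (occ \<omega> u)}.
              \<forall>b\<in>{real (Nexc \<omega> (boxB L z) (boxU K L z) u) / cap (boxB L z),
                   pairing (eq_bar (boxB L z)) (boxB L z) (occ \<omega> u),
                   pairing (unif_meas (boxB L z)) (boxB L z) (occ \<omega> u)}.
                card {s \<in> \<Sigma>. min a b \<le> s \<and> s \<le> max a b} \<le> 2"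
      using sep_arith[OF assms(4) sep assms(7) assms(6) h1 h2] by blast
  qed
  show ?thesis using I II by blast
qed

end
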